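(* Let $K/L$ be a Galois extension of number fields with rings of integers $R\supseteq S$, let $q$ be a rational prime, $R_q=R/qR$, $S_q=S/qS\subseteq R_q$, and let $T=\operatorname{Tr}^{R_q}_{S_q}:R_q\to S_q$. Fix $s\in R_q$ and an invertible $a_0\in R_q$ such that $T(a_0)$ is invertible in $S_q$, and let $\chi$ be a distribution on $R_q$. If $(a,b)$ is distributed according to $A_{a_0S_q,s,\chi}$, then $(T(a),T(b))$ is distributed according to the Ring-LWE distribution on $S_q\times S_q$ with secret $s'=T(a_0s)/T(a_0)$ and error distribution $T(\chi)$; that is, $T(a)$ is uniform in $S_q$ and $T(b)=T(a)s'+T(e)$ with $e\sim\chi$ independent of $T(a)$.
   Context: The Galois group $\mathrm{Gal}(K/L)$ maps $qR$ to itself and fixes $S$ pointwise, hence acts on $R_q$ fixing $S_q$; $T(x)=\sum_{\sigma\in\mathrm{Gal}(K/L)}\sigma(x)$, an $S_q$-linear map $R_q\to S_q$ satisfying $\operatorname{Tr}^R_S(x)\bmod qS=T(x\bmod qR)$. $T(\chi)$ denotes the pushforward of $\chi$ under $T$. For $a_0\in R_q$, $A_{a_0S_q,s,\chi}$ is the distribution obtained by choosing $a$ uniformly in $a_0S_q$, $e\sim\chi$ independently, and outputting $(a,as+e)$. *)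

theory Defs
  imports Complex_Main "HOL-Algebra.QuotRing" "HOL-Computational_Algebra.Polynomial"
    "HOL-Probability.Probability_Mass_Function"
begin

definition number_field :: "complex set \<Rightarrow> bool" where
  "number_field K \<longleftrightarrow>
     0 \<in> K \<and> 1 \<in> K \<and>
     (\<forall>x\<in>K. \<forall>y\<in>K. x + y \<in> K \<and> x * y \<in> K) \<and>
     (\<forall>x\<in>K. - x \<in> K) \<and> (\<forall>x\<in>K. x \<noteq> 0 \<longrightarrow> inverse x \<in> K) \<and>
     (\<exists>B. finite B \<and> B \<subseteq> K \<and> (\<forall>x\<in>K. \<exists>c. x = (\<Sum>b\<in>B. of_rat (c b) * b)))"

definition algebraic_integer :: "complex \<Rightarrow> bool" where
  "algebraic_integer x \<longleftrightarrow>
     (\<exists>p :: int poly. lead_coeff p = 1 \<and> poly (map_poly of_int p) x = 0)"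

definition ring_of_integers :: "complex set \<Rightarrow> complex set" where
  "ring_of_integers K = {x \<in> K. algebraic_integer x}"

definition Gal :: "complex set \<Rightarrow> complex set \<Rightarrow> (complex \<Rightarrow> complex) set" where
  "Gal K L = {\<sigma>. bij_betw \<sigma> K K \<and>
      (\<forall>x\<in>K. \<forall>y\<in>K. \<sigma> (x + y) = \<sigma> x + \<sigma> y \<and> \<sigma> (x * y) = \<sigma> x * \<sigma> y) \<and>
      \<sigma> 1 = 1 \<and>
      (\<forall>x\<in>L. \<sigma> x = x) \<and> (\<forall>x. x \<notin> K \<longrightarrow> \<sigma> x = x)}"

definition galois_ext :: "complex set \<Rightarrow> complex set \<Rightarrow> bool" where
  "galois_ext K L \<longleftrightarrow> number_field K \<and> number_field L \<and> L \<subseteq> K \<and>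
     {x \<in> K. \<forall>\<sigma>\<in>Gal K L. \<sigma> x = x} = L"

definition crng :: "complex set \<Rightarrow> complex ring" where
  "crng A = \<lparr>carrier = A, monoid.mult = (*), one = 1, zero = 0, add = (+)\<rparr>"

definition qideal :: "complex set \<Rightarrow> nat \<Rightarrow> complex set" where
  "qideal A q = {of_nat q * r | r. r \<in> A}"

definition quot_q :: "complex set \<Rightarrow> nat \<Rightarrow> complex set ring" where
  "quot_q A q = crng A Quot qideal A q"

definition red :: "complex set \<Rightarrow> nat \<Rightarrow> complex \<Rightarrow> complex set" where
  "red A q x = qideal A q +>\<^bsub>crng A\<^esub> x"

(* S_q = S/qS, viewed inside R_q via s + qS \<mapsto> s + qR *)
definition Sq_in_Rq :: "complex set \<Rightarrow> complex set \<Rightarrow> nat \<Rightarrow> complex set set" where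
  "Sq_in_Rq R S q = red R q ` S"

definition traceq :: "complex set \<Rightarrow> complex set \<Rightarrow> nat \<Rightarrow> complex set \<Rightarrow> complex set" where
  "traceq K L q X =
     red (ring_of_integers K) q (\<Sum>\<sigma>\<in>Gal K L. \<sigma> (SOME x. x \<in> X))"

definition A_dist :: "'a ring \<Rightarrow> 'a set \<Rightarrow> 'a \<Rightarrow> 'a \<Rightarrow> 'a pmf \<Rightarrow> ('a \<times> 'a) pmf" where
  "A_dist Rq Sq a0 s chi =
     bind_pmf (pmf_of_set ((\<lambda>c. a0 \<otimes>\<^bsub>Rq\<^esub> c) ` Sq)) (\<lambda>a.
     bind_pmf chi (\<lambda>e. return_pmf (a, (a \<otimes>\<^bsub>Rq\<^esub> s) \<oplus>\<^bsub>Rq\<^esub> e)))"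

definition RLWE_dist :: "'a ring \<Rightarrow> 'a set \<Rightarrow> 'a \<Rightarrow> 'a pmf \<Rightarrow> ('a \<times> 'a) pmf" where
  "RLWE_dist Rq Sq s psi =
     bind_pmf (pmf_of_set Sq) (\<lambda>a.
     bind_pmf psi (\<lambda>e. return_pmf (a, (a \<otimes>\<^bsub>Rq\<^esub> s) \<oplus>\<^bsub>Rq\<^esub> e)))"

end

theory Submission
  imports Defs "Jordan_Normal_Form.Char_Poly"
begin



lemma alg_int_of_eig_nat:
  fixes M :: "nat \<Rightarrow> nat \<Rightarrow> int" and v :: "nat \<Rightarrow> complex"
  assumes z: "z < n" "v z \<noteq> 0" and ev: "\<forall>i<n. (\<Sum>j<n. of_int (M i j) * v j) = x * v i"
  shows "algebraic_integer x"
proof -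
  define A where "A = mat n n (\<lambda>(i,j). M i j)"
  define w where "w = vec n v"
  have A: "A \<in> carrier_mat n n" unfolding A_def by simp
  have "eigenvector (map_mat of_int A) w x"
    unfolding eigenvector_def
  proof (intro conjI)
    show "w \<in> carrier_vec (dim_row (map_mat of_int A))" using A unfolding w_def by simp
    show "w \<noteq> 0\<^sub>v (dim_row (map_mat of_int A))"
    proof
      assume "w = 0\<^sub>v (dim_row (map_mat of_int A))"
      hence "w $ z = 0" using A z by simp
      thus False using z unfolding w_def by simp
    qed
    show "map_mat of_int A *\<^sub>v w = x \<cdot>\<^sub>v w"
    proof (rule eq_vecI)
      fix i assume "i < dim_vec (x \<cdot>\<^sub>v w)"
      hence i: "i < n" unfolding w_def by simp
      have "(map_mat of_int A *\<^sub>v w) $ i = (\<Sum>j<n. of_int (M i j) * v j)"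
        using i A unfolding w_def A_def
        by (simp add: scalar_prod_def lessThan_atLeast0 mult.commute)
      also have "\<dots> = x * v i" using ev i by simp
      finally show "(map_mat of_int A *\<^sub>v w) $ i = (x \<cdot>\<^sub>v w) $ i" using i unfolding w_def by simp
    qed (insert A, simp add: w_def)
  qed
  hence "eigenvalue (map_mat of_int A) x" unfolding eigenvalue_def by blast
  moreover have A': "map_mat of_int A \<in> carrier_mat n n" using A by simp
  ultimately have "poly (char_poly (map_mat of_int A)) x = 0"
    using eigenvalue_root_char_poly[OF A', of x] by blast
  hence "poly (map_poly of_int (char_poly A)) x = 0"
    by (metis of_int_hom.char_poly_hom[OF A])
  moreover have "lead_coeff (char_poly A) = 1" using degree_monic_char_poly[OF A] by simp
  ultimately show ?thesis unfolding algebraic_integer_def by blast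
qed

lemma alg_int_of_eig:
  fixes I :: "'a set" and M :: "'a \<Rightarrow> 'a \<Rightarrow> int" and v :: "'a \<Rightarrow> complex"
  assumes "finite I" "z \<in> I" "v z \<noteq> 0"
    and ev: "\<forall>i\<in>I. (\<Sum>j\<in>I. of_int (M i j) * v j) = x * v i"
  shows "algebraic_integer x"
proof -
  obtain h where h: "bij_betw h {0..<card I} I" using ex_bij_betw_nat_finite[OF assms(1)] by blast
  have "z \<in> h ` {0..<card I}" using h assms(2) by (simp add: bij_betw_def)
  then obtain k where k: "k < card I" "h k = z" by auto
  show ?thesis
  proof (rule alg_int_of_eig_nat[where z=k and n="card I" and v="v \<circ> h" and M="\<lambda>i j. M (h i) (h j)"])
    show "k < card I" "(v \<circ> h) k \<noteq> 0" using k assms by auto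
    show "\<forall>i<card I. (\<Sum>j<card I. of_int (M (h i) (h j)) * (v \<circ> h) j) = x * (v \<circ> h) i"
    proof (intro allI impI)
      fix i assume i: "i < card I"
      have "(\<Sum>j<card I. of_int (M (h i) (h j)) * (v \<circ> h) j) = (\<Sum>j\<in>I. of_int (M (h i) j) * v j)"
        using sum.reindex_bij_betw[OF h, of "\<lambda>j. of_int (M (h i) j) * v j"]
        by (simp add: lessThan_atLeast0)
      also have "\<dots> = x * v (h i)" using ev h i unfolding bij_betw_def by auto
      finally show "(\<Sum>j<card I. of_int (M (h i) (h j)) * (v \<circ> h) j) = x * (v \<circ> h) i" by simp
    qed
  qed
qed

lemma eig_of_alg_int:
  assumes "algebraic_integer x"
  shows "\<exists>(I::nat set) M v z. finite I \<and> z \<in> I \<and> v z \<noteq> (0::complex) \<and>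
           (\<forall>i\<in>I. (\<Sum>j\<in>I. of_int (M i j) * v j) = x * v i)"
proof -
  obtain p :: "int poly" where p: "lead_coeff p = 1" "poly (map_poly of_int p) x = 0"
    using assms unfolding algebraic_integer_def by blast
  define d where "d = degree p"
  have "poly (map_poly of_int p) x = (\<Sum>j\<le>d. of_int (coeff p j) * x ^ j)"
    unfolding poly_altdef d_def by (simp add: coeff_map_poly degree_map_poly)
  also have "\<dots> = (\<Sum>j<d. of_int (coeff p j) * x ^ j) + x ^ d"
    using p(1) unfolding d_def by (simp add: lessThan_Suc_atMost[symmetric])
  finally have xd: "x ^ d = - (\<Sum>j<d. of_int (coeff p j) * x ^ j)" using p(2)
    by (simp add: eq_neg_iff_add_eq_0 add.commute)
  have d0: "d > 0"
  proof (rule ccontr)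
    assume "\<not> d > 0"
    hence "d = 0" by simp
    thus False using xd by simp
  qed
  define M where "M = (\<lambda>i j. if i + 1 < d then (if j = i + 1 then 1 else 0) else - coeff p j)"
  define v where "v = (\<lambda>j::nat. x ^ j)"
  have "\<forall>i\<in>{..<d}. (\<Sum>j\<in>{..<d}. of_int (M i j) * v j) = x * v i"
  proof
    fix i assume i: "i \<in> {..<d}"
    show "(\<Sum>j\<in>{..<d}. of_int (M i j) * v j) = x * v i"
    proof (cases "i + 1 < d")
      case True
      have "(\<Sum>j\<in>{..<d}. of_int (M i j) * v j) = (\<Sum>j\<in>{..<d}. if j = i + 1 then x ^ (i+1) else 0)"
        unfolding M_def v_def using True by (intro sum.cong) auto
      also have "\<dots> = x ^ (i + 1)" using True by (simp add: sum.delta')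
      finally show ?thesis unfolding v_def by simp
    next
      case False
      hence "i = d - 1" using i by simp
      hence "x * v i = x ^ d" unfolding v_def using d0 by (metis Suc_diff_1 power_Suc)
      moreover have "(\<Sum>j\<in>{..<d}. of_int (M i j) * v j) = - (\<Sum>j<d. of_int (coeff p j) * x ^ j)"
        unfolding M_def v_def using False by (simp add: sum_negf)
      ultimately show ?thesis using xd by simp
    qed
  qed
  moreover have "v 0 \<noteq> 0" unfolding v_def by simp
  ultimately show ?thesis using d0 by (intro exI[of _ "{..<d}"] exI[of _ M] exI[of _ v] exI[of _ 0]) auto
qed

lemma alg_int_add:
  assumes "algebraic_integer x" "algebraic_integer y"
  shows "algebraic_integer (x + y)"
proof -
  obtain I :: "nat set" and M v z where A: "finite I" "z \<in> I" "v z \<noteq> 0"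
    "\<forall>i\<in>I. (\<Sum>j\<in>I. of_int (M i j) * v j) = x * v i" using eig_of_alg_int[OF assms(1)] by blast
  obtain J :: "nat set" and N w j0 where B: "finite J" "j0 \<in> J" "w j0 \<noteq> 0"
    "\<forall>i\<in>J. (\<Sum>j\<in>J. of_int (N i j) * w j) = y * w i" using eig_of_alg_int[OF assms(2)] by blast
  define P where "P = (\<lambda>(i::nat,j::nat) (k,l). M i k * (if j = l then 1 else 0) + (if i = k then 1 else 0) * N j l)"
  define u where "u = (\<lambda>(i,j). v i * w j)"
  show ?thesis
  proof (rule alg_int_of_eig[where I="I \<times> J" and z="(z,j0)" and v=u and M=P])
    show "finite (I \<times> J)" "(z, j0) \<in> I \<times> J" "u (z, j0) \<noteq> 0" using A B unfolding u_def by auto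
    show "\<forall>i\<in>I \<times> J. (\<Sum>j\<in>I \<times> J. of_int (P i j) * u j) = (x + y) * u i"
    proof
      fix ij assume "ij \<in> I \<times> J"
      then obtain i j where ij: "ij = (i,j)" "i \<in> I" "j \<in> J" by auto
      have "(\<Sum>kl\<in>I \<times> J. of_int (P ij kl) * u kl) = (\<Sum>k\<in>I. \<Sum>l\<in>J. of_int (P (i,j) (k,l)) * u (k,l))"
        unfolding ij by (simp add: sum.cartesian_product)
      also have "\<dots> = (\<Sum>k\<in>I. \<Sum>l\<in>J. (if j = l then of_int (M i k) * v k * w l else 0)
                          + (if i = k then of_int (N j l) * v k * w l else 0))"
        unfolding P_def u_def by (intro sum.cong refl) (auto simp: algebra_simps)
      also have "\<dots> = (\<Sum>k\<in>I. \<Sum>l\<in>J. (if j = l then of_int (M i k) * v k * w l else 0))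
                         + (\<Sum>l\<in>J. \<Sum>k\<in>I. (if i = k then of_int (N j l) * v k * w l else 0))"
        by (simp add: sum.distrib sum.swap[of _ I J])
      also have "\<dots> = (\<Sum>k\<in>I. of_int (M i k) * v k * w j) + (\<Sum>l\<in>J. of_int (N j l) * v i * w l)"
        using A(1) B(1) ij by (simp add: sum.delta)
      also have "\<dots> = (\<Sum>k\<in>I. of_int (M i k) * v k) * w j + v i * (\<Sum>l\<in>J. of_int (N j l) * w l)"
        by (simp add: sum_distrib_right sum_distrib_left mult.assoc mult.left_commute)
      also have "\<dots> = x * v i * w j + v i * (y * w j)"
        using A(4) B(4) ij by simp
      finally show "(\<Sum>kl\<in>I \<times> J. of_int (P ij kl) * u kl) = (x + y) * u ij"
        unfolding ij u_def by (simp add: algebra_simps)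
    qed
  qed
qed

lemma alg_int_mult:
  assumes "algebraic_integer x" "algebraic_integer y"
  shows "algebraic_integer (x * y)"
proof -
  obtain I :: "nat set" and M v z where A: "finite I" "z \<in> I" "v z \<noteq> 0"
    "\<forall>i\<in>I. (\<Sum>j\<in>I. of_int (M i j) * v j) = x * v i" using eig_of_alg_int[OF assms(1)] by blast
  obtain J :: "nat set" and N w j0 where B: "finite J" "j0 \<in> J" "w j0 \<noteq> 0"
    "\<forall>i\<in>J. (\<Sum>j\<in>J. of_int (N i j) * w j) = y * w i" using eig_of_alg_int[OF assms(2)] by blast
  define P where "P = (\<lambda>(i::nat,j::nat) (k,l). M i k * N j l)"
  define u where "u = (\<lambda>(i,j). v i * w j)"
  show ?thesis
  proof (rule alg_int_of_eig[where I="I \<times> J" and z="(z,j0)" and v=u and M=P])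
    show "finite (I \<times> J)" "(z, j0) \<in> I \<times> J" "u (z, j0) \<noteq> 0" using A B unfolding u_def by auto
    show "\<forall>i\<in>I \<times> J. (\<Sum>j\<in>I \<times> J. of_int (P i j) * u j) = (x * y) * u i"
    proof
      fix ij assume "ij \<in> I \<times> J"
      then obtain i j where ij: "ij = (i,j)" "i \<in> I" "j \<in> J" by auto
      have "(\<Sum>kl\<in>I \<times> J. of_int (P ij kl) * u kl) = (\<Sum>k\<in>I. \<Sum>l\<in>J. of_int (P (i,j) (k,l)) * u (k,l))"
        unfolding ij by (simp add: sum.cartesian_product)
      also have "\<dots> = (\<Sum>k\<in>I. of_int (M i k) * v k * (\<Sum>l\<in>J. of_int (N j l) * w l))"
        unfolding P_def u_def by (simp add: sum_distrib_left algebra_simps)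
      also have "\<dots> = (x * v i) * (y * w j)"
        using A(4) B(4) ij by (simp add: sum_distrib_right[symmetric])
      finally show "(\<Sum>kl\<in>I \<times> J. of_int (P ij kl) * u kl) = (x * y) * u ij"
        unfolding ij u_def by (simp add: algebra_simps)
    qed
  qed
qed




lemma alg_integer_iff: "algebraic_integer x \<longleftrightarrow> algebraic_int x"
  unfolding algebraic_integer_def algebraic_int_altdef_ipoly by blast

lemma sum_closed_set:
  assumes "0 \<in> X" "\<And>x y. x \<in> X \<Longrightarrow> y \<in> X \<Longrightarrow> x + y \<in> X" "\<And>a. a \<in> A \<Longrightarrow> f a \<in> X"
  shows "sum f A \<in> X"
  using assms(3)
proof (induction A rule: infinite_finite_induct)
  case (infinite A) thus ?case using assms(1) by simp
next
  case empty thus ?case using assms(1) by simp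
next
  case (insert a A) thus ?case using assms(2) by simp
qed

context fixes K :: "complex set" assumes nf: "number_field K"
begin

lemma nf_0: "0 \<in> K" and nf_1: "1 \<in> K"
  and nf_add: "x \<in> K \<Longrightarrow> y \<in> K \<Longrightarrow> x + y \<in> K"
  and nf_mult: "x \<in> K \<Longrightarrow> y \<in> K \<Longrightarrow> x * y \<in> K"
  and nf_minus: "x \<in> K \<Longrightarrow> - x \<in> K"
  using nf unfolding number_field_def by auto

lemma nf_of_nat: "of_nat n \<in> K"
  by (induction n) (auto intro: nf_add nf_0 nf_1)

lemma nf_of_int: "of_int n \<in> K"
proof (cases "n \<ge> 0")
  case True thus ?thesis using nf_of_nat[of "nat n"] by simp
next
  case False
  hence "of_int n = - (of_nat (nat (- n)) :: complex)" by simp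
  thus ?thesis using nf_minus nf_of_nat by metis
qed

lemma roi_iff: "x \<in> ring_of_integers K \<longleftrightarrow> x \<in> K \<and> algebraic_int x"
  unfolding ring_of_integers_def alg_integer_iff by simp

lemma roi_0: "0 \<in> ring_of_integers K" and roi_1: "1 \<in> ring_of_integers K"
  using nf_0 nf_1 by (auto simp: roi_iff)

lemma roi_of_nat: "of_nat n \<in> ring_of_integers K"
  using nf_of_nat by (auto simp: roi_iff)

lemma roi_add: "x \<in> ring_of_integers K \<Longrightarrow> y \<in> ring_of_integers K \<Longrightarrow> x + y \<in> ring_of_integers K"
  using nf_add alg_int_add by (auto simp: roi_iff alg_integer_iff[symmetric])

lemma roi_mult: "x \<in> ring_of_integers K \<Longrightarrow> y \<in> ring_of_integers K \<Longrightarrow> x * y \<in> ring_of_integers K"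
  using nf_mult alg_int_mult by (auto simp: roi_iff alg_integer_iff[symmetric])

lemma roi_minus: "x \<in> ring_of_integers K \<Longrightarrow> - x \<in> ring_of_integers K"
  using nf_minus by (auto simp: roi_iff)

lemma roi_diff: "x \<in> ring_of_integers K \<Longrightarrow> y \<in> ring_of_integers K \<Longrightarrow> x - y \<in> ring_of_integers K"
  using roi_add[of x "-y"] roi_minus[of y] by simp

lemma roi_K: "x \<in> ring_of_integers K \<Longrightarrow> x \<in> K" by (simp add: roi_iff)

lemma crng_cring: "cring (crng (ring_of_integers K))"
proof (rule cringI)
  show "abelian_group (crng (ring_of_integers K))"
    by (rule abelian_groupI) (auto simp: crng_def roi_add roi_0 intro!: bexI[of _ "- _"] roi_minus)
  show "comm_monoid (crng (ring_of_integers K))"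
    by (rule comm_monoidI) (auto simp: crng_def roi_mult roi_1)
qed (auto simp: crng_def algebra_simps)

lemma qideal_ideal: "ideal (qideal (ring_of_integers K) q) (crng (ring_of_integers K))"
proof -
  have "qideal (ring_of_integers K) q = PIdl\<^bsub>crng (ring_of_integers K)\<^esub> (of_nat q)"
    unfolding cgenideal_def qideal_def crng_def by (auto simp: mult.commute)
  thus ?thesis using cring.cgenideal_ideal[OF crng_cring, of "of_nat q"] roi_of_nat
    by (simp add: crng_def)
qed

end

lemma red_eq: "red A q x = {of_nat q * r + x | r. r \<in> A}"
  unfolding red_def a_r_coset_def r_coset_def crng_def qideal_def by auto




locale gsetup =
  fixes K L :: "complex set" and q :: nat
  assumes galois: "galois_ext K L" and q_prime: "prime q"
begin

lemma nfK: "number_field K" and nfL: "number_field L" and LK: "L \<subseteq> K"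
  and fixedL: "{x \<in> K. \<forall>\<sigma>\<in>Gal K L. \<sigma> x = x} = L"
  using galois unfolding galois_ext_def by auto

context fixes \<sigma> assumes sg: "\<sigma> \<in> Gal K L"
begin

lemma gal_K: "x \<in> K \<Longrightarrow> \<sigma> x \<in> K"
  using sg unfolding Gal_def bij_betw_def by auto

lemma gal_add: "x \<in> K \<Longrightarrow> y \<in> K \<Longrightarrow> \<sigma> (x + y) = \<sigma> x + \<sigma> y"
  using sg unfolding Gal_def by auto

lemma gal_mult: "x \<in> K \<Longrightarrow> y \<in> K \<Longrightarrow> \<sigma> (x * y) = \<sigma> x * \<sigma> y"
  using sg unfolding Gal_def by auto

lemma gal_L: "x \<in> L \<Longrightarrow> \<sigma> x = x"
  using sg unfolding Gal_def by auto

lemma gal_out: "x \<notin> K \<Longrightarrow> \<sigma> x = x"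
  using sg unfolding Gal_def by auto

lemma gal_1: "\<sigma> 1 = 1"
  using sg unfolding Gal_def by auto

lemma gal_0: "\<sigma> 0 = 0"
  using gal_add[OF nf_0[OF nfK] nf_0[OF nfK]] by simp

lemma gal_minus: "x \<in> K \<Longrightarrow> \<sigma> (- x) = - \<sigma> x"
proof -
  assume x: "x \<in> K"
  have "\<sigma> x + \<sigma> (- x) = 0" using gal_add[of x "-x"] nf_minus[OF nfK, of x] gal_0 x by simp
  thus ?thesis by (simp add: add_eq_0_iff)
qed

lemma gal_of_nat: "\<sigma> (of_nat n) = of_nat n"
proof (induction n)
  case 0 thus ?case using gal_0 by simp
next
  case (Suc n)
  have "\<sigma> (of_nat (Suc n)) = \<sigma> (1 + of_nat n)" by simp
  also have "\<dots> = 1 + of_nat n" using gal_add[OF nf_1[OF nfK] nf_of_nat[OF nfK, of n]] gal_1 Suc by simp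
  finally show ?case by simp
qed

lemma gal_of_int: "\<sigma> (of_int n) = of_int n"
proof (cases "n \<ge> 0")
  case True thus ?thesis using gal_of_nat[of "nat n"] by simp
next
  case False
  hence "of_int n = - (of_nat (nat (- n)) :: complex)" by simp
  thus ?thesis using gal_minus[OF nf_of_nat[OF nfK]] gal_of_nat by metis
qed

lemma gal_poly: "x \<in> K \<Longrightarrow> poly (map_poly of_int p) x \<in> K \<and>
   \<sigma> (poly (map_poly of_int p) x) = poly (map_poly of_int p) (\<sigma> x)"
proof (induction p)
  case 0 thus ?case using gal_0 nf_0[OF nfK] by simp
next
  case (pCons a p)
  have e: "poly (map_poly of_int (pCons a p)) y = of_int a + y * poly (map_poly of_int p) y" for y :: complex
    by (cases "a = 0 \<and> p = 0") (simp_all add: map_poly_pCons)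
  show ?case unfolding e using pCons gal_add gal_mult gal_of_int gal_K nf_of_int[OF nfK]
    nf_add[OF nfK] nf_mult[OF nfK] by simp
qed

lemma gal_R: "x \<in> ring_of_integers K \<Longrightarrow> \<sigma> x \<in> ring_of_integers K"
proof -
  assume x: "x \<in> ring_of_integers K"
  then obtain p :: "int poly" where p: "lead_coeff p = 1" "poly (map_poly of_int p) x = 0"
    unfolding ring_of_integers_def algebraic_integer_def by blast
  have xK: "x \<in> K" using x unfolding ring_of_integers_def by simp
  have "poly (map_poly of_int p) (\<sigma> x) = 0" using gal_poly[OF xK, of p] p gal_0 by simp
  thus ?thesis using p gal_K[OF xK] unfolding ring_of_integers_def algebraic_integer_def by blast
qed

lemma gal_sum: "(\<And>a. a \<in> A \<Longrightarrow> f a \<in> K) \<Longrightarrow> \<sigma> (sum f A) = (\<Sum>a\<in>A. \<sigma> (f a))"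
proof (induction A rule: infinite_finite_induct)
  case (insert a A)
  have "sum f A \<in> K" using insert by (intro sum_closed_set) (auto intro: nf_0[OF nfK] nf_add[OF nfK])
  thus ?case using insert gal_add by simp
qed (auto simp: gal_0)

lemma gal_inj: "inj \<sigma>"
proof
  fix a b assume ab: "\<sigma> a = \<sigma> b"
  have bij: "bij_betw \<sigma> K K" using sg unfolding Gal_def by auto
  show "a = b"
  proof (cases "a \<in> K"; cases "b \<in> K")
    assume "a \<in> K" "b \<in> K" thus ?thesis using bij ab unfolding bij_betw_def inj_on_def by auto
  next
    assume "a \<in> K" "b \<notin> K" thus ?thesis using ab gal_out gal_K by metis
  next
    assume "a \<notin> K" "b \<in> K" thus ?thesis using ab gal_out gal_K by metis
  next
    assume "a \<notin> K" "b \<notin> K" thus ?thesis using ab gal_out by metis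
  qed
qed

end

lemma gal_comp: "\<sigma> \<in> Gal K L \<Longrightarrow> \<tau> \<in> Gal K L \<Longrightarrow> \<tau> \<circ> \<sigma> \<in> Gal K L"
proof -
  assume s: "\<sigma> \<in> Gal K L" and t: "\<tau> \<in> Gal K L"
  have b: "bij_betw (\<tau> \<circ> \<sigma>) K K" using s t unfolding Gal_def by (auto intro: bij_betw_trans)
  show ?thesis unfolding Gal_def
  proof (intro CollectI conjI ballI allI impI b)
    fix x y assume "x \<in> K" "y \<in> K"
    thus "(\<tau> \<circ> \<sigma>) (x + y) = (\<tau> \<circ> \<sigma>) x + (\<tau> \<circ> \<sigma>) y"
      "(\<tau> \<circ> \<sigma>) (x * y) = (\<tau> \<circ> \<sigma>) x * (\<tau> \<circ> \<sigma>) y"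
      using gal_add[OF s] gal_add[OF t] gal_mult[OF s] gal_mult[OF t] gal_K[OF s] by auto
  next
    show "(\<tau> \<circ> \<sigma>) 1 = 1" using gal_1[OF s] gal_1[OF t] by simp
  next
    fix x assume "x \<in> L" thus "(\<tau> \<circ> \<sigma>) x = x" using gal_L[OF s] gal_L[OF t] by simp
  next
    fix x assume "x \<notin> K" thus "(\<tau> \<circ> \<sigma>) x = x" using gal_out[OF s] gal_out[OF t] by simp
  qed
qed

definition tr :: "complex \<Rightarrow> complex" where
  "tr x = (\<Sum>\<sigma>\<in>Gal K L. \<sigma> x)"

lemma tr_K: "x \<in> K \<Longrightarrow> tr x \<in> K"
  unfolding tr_def by (intro sum_closed_set) (auto intro: nf_0[OF nfK] nf_add[OF nfK] gal_K)

lemma tr_R: "x \<in> ring_of_integers K \<Longrightarrow> tr x \<in> ring_of_integers K"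
  unfolding tr_def by (intro sum_closed_set) (auto intro: roi_0[OF nfK] roi_add[OF nfK] gal_R)

lemma tr_fixed: assumes "\<tau> \<in> Gal K L" "x \<in> K" shows "\<tau> (tr x) = tr x"
proof (cases "finite (Gal K L)")
  case False thus ?thesis unfolding tr_def using gal_0[OF assms(1)] by simp
next
  case True
  have img: "(\<lambda>\<sigma>. \<tau> \<circ> \<sigma>) ` Gal K L = Gal K L"
  proof (rule endo_inj_surj[OF True])
    show "(\<lambda>\<sigma>. \<tau> \<circ> \<sigma>) ` Gal K L \<subseteq> Gal K L" using gal_comp assms(1) by auto
    show "inj_on (\<lambda>\<sigma>. \<tau> \<circ> \<sigma>) (Gal K L)"
      using gal_inj[OF assms(1)] by (auto simp: inj_on_def inj_def fun_eq_iff)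
  qed
  have inj: "inj_on (\<lambda>\<sigma>. \<tau> \<circ> \<sigma>) (Gal K L)"
    using gal_inj[OF assms(1)] by (auto simp: inj_on_def inj_def fun_eq_iff)
  have "\<tau> (tr x) = (\<Sum>\<sigma>\<in>Gal K L. \<tau> (\<sigma> x))"
    unfolding tr_def using gal_sum[OF assms(1), of "Gal K L" "\<lambda>\<sigma>. \<sigma> x"] gal_K assms(2) by auto
  also have "\<dots> = (\<Sum>\<sigma>\<in>(\<lambda>\<sigma>. \<tau> \<circ> \<sigma>) ` Gal K L. \<sigma> x)"
    using sum.reindex[OF inj, of "\<lambda>\<sigma>. \<sigma> x"] by simp
  also have "\<dots> = tr x" unfolding img tr_def ..
  finally show ?thesis .
qed

lemma tr_L: "x \<in> K \<Longrightarrow> tr x \<in> L"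
  using fixedL tr_K tr_fixed by blast

lemma tr_S: "x \<in> ring_of_integers K \<Longrightarrow> tr x \<in> ring_of_integers L"
  using tr_L tr_R roi_K[OF nfK] unfolding ring_of_integers_def by blast

lemma tr_add: "x \<in> K \<Longrightarrow> y \<in> K \<Longrightarrow> tr (x + y) = tr x + tr y"
  unfolding tr_def by (cases "finite (Gal K L)") (auto simp: gal_add sum.distrib)

lemma tr_smult: "c \<in> L \<Longrightarrow> x \<in> K \<Longrightarrow> tr (c * x) = c * tr x"
  unfolding tr_def using LK
  by (cases "finite (Gal K L)") (auto simp: gal_mult gal_L subsetD sum_distrib_left)

end




context gsetup begin

abbreviation "R \<equiv> ring_of_integers K"
abbreviation "S \<equiv> ring_of_integers L"
abbreviation "Rq \<equiv> quot_q R q"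
abbreviation "Sq \<equiv> Sq_in_Rq R S q"
abbreviation "rd \<equiv> red R q"

lemma SR: "S \<subseteq> R" using LK unfolding ring_of_integers_def by auto

lemma Rq_cring: "cring Rq"
  unfolding quot_q_def by (rule ideal.quotient_is_cring[OF qideal_ideal[OF nfK] crng_cring[OF nfK]])

lemma red_fun: "rd = (+>\<^bsub>crng R\<^esub>) (qideal R q)"
  by (simp add: fun_eq_iff red_def)

lemma red_hom: "rd \<in> Ring.ring_hom (crng R) Rq"
  unfolding red_fun quot_q_def by (rule ideal.rcos_ring_hom[OF qideal_ideal[OF nfK]])

lemma carrier_Rq: "carrier Rq = rd ` R"
  unfolding quot_q_def FactRing_def A_RCOSETS_def RCOSETS_def red_def a_r_coset_def
  by (auto simp: crng_def)

lemma red_in: "x \<in> R \<Longrightarrow> rd x \<in> carrier Rq" using carrier_Rq by auto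

lemma red_add: "x \<in> R \<Longrightarrow> y \<in> R \<Longrightarrow> rd (x + y) = rd x \<oplus>\<^bsub>Rq\<^esub> rd y"
  using Ring.ring_hom_add[OF red_hom, of x y] by (simp add: crng_def)

lemma red_mult: "x \<in> R \<Longrightarrow> y \<in> R \<Longrightarrow> rd (x * y) = rd x \<otimes>\<^bsub>Rq\<^esub> rd y"
  using Ring.ring_hom_mult[OF red_hom, of x y] by (simp add: crng_def)

lemma red_eq_iff: assumes "x \<in> R" "y \<in> R"
  shows "rd x = rd y \<longleftrightarrow> (\<exists>r\<in>R. x - y = of_nat q * r)"
proof
  assume "rd x = rd y"
  moreover have "x \<in> rd x" unfolding red_eq using roi_0[OF nfK] by force
  ultimately have "x \<in> rd y" by simp
  thus "\<exists>r\<in>R. x - y = of_nat q * r" unfolding red_eq by auto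
next
  assume "\<exists>r\<in>R. x - y = of_nat q * r"
  then obtain r0 where r0: "r0 \<in> R" "x - y = of_nat q * r0" by blast
  show "rd x = rd y" unfolding red_eq
  proof (intro equalityI subsetI)
    fix z assume "z \<in> {of_nat q * r + x |r. r \<in> R}"
    then obtain r where "r \<in> R" "z = of_nat q * r + x" by blast
    hence "z = of_nat q * (r + r0) + y" "r + r0 \<in> R" using r0 roi_add[OF nfK]
      by (auto simp: algebra_simps eq_diff_eq)
    thus "z \<in> {of_nat q * r + y |r. r \<in> R}" by blast
  next
    fix z assume "z \<in> {of_nat q * r + y |r. r \<in> R}"
    then obtain r where "r \<in> R" "z = of_nat q * r + y" by blast
    hence "z = of_nat q * (r - r0) + x" "r - r0 \<in> R" using r0 roi_diff[OF nfK]
      by (auto simp: algebra_simps eq_diff_eq)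
    thus "z \<in> {of_nat q * r + x |r. r \<in> R}" by blast
  qed
qed

lemma T_red: assumes w: "w \<in> R" shows "traceq K L q (rd w) = rd (tr w)"
proof -
  define x0 where "x0 = (SOME x. x \<in> rd w)"
  have "w \<in> rd w" unfolding red_eq using roi_0[OF nfK] by force
  hence "x0 \<in> rd w" unfolding x0_def by (rule someI)
  then obtain r where r: "r \<in> R" "x0 = of_nat q * r + w" unfolding red_eq by blast
  have x0R: "x0 \<in> R" using r w roi_add[OF nfK] roi_mult[OF nfK] roi_of_nat[OF nfK] by simp
  have "tr x0 = of_nat q * tr r + tr w"
    using r w tr_add tr_smult nf_of_nat[OF nfL] roi_K[OF nfK] nf_mult[OF nfK] nf_of_nat[OF nfK]
    by simp
  hence "rd (tr x0) = rd (tr w)"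
    using red_eq_iff[OF tr_R[OF x0R] tr_R[OF w]] tr_R[OF r(1)] by auto
  thus ?thesis unfolding traceq_def x0_def[symmetric] tr_def by simp
qed

lemma Sq_sub: "Sq \<subseteq> carrier Rq"
  unfolding Sq_in_Rq_def using SR red_in by auto

lemma T_in: "X \<in> carrier Rq \<Longrightarrow> traceq K L q X \<in> Sq"
  using carrier_Rq T_red tr_S unfolding Sq_in_Rq_def by auto

lemma T_carrier: "X \<in> carrier Rq \<Longrightarrow> traceq K L q X \<in> carrier Rq"
  using T_in Sq_sub by auto

lemma T_add: assumes "X \<in> carrier Rq" "Y \<in> carrier Rq"
  shows "traceq K L q (X \<oplus>\<^bsub>Rq\<^esub> Y) = traceq K L q X \<oplus>\<^bsub>Rq\<^esub> traceq K L q Y"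
proof -
  obtain u v where uv: "u \<in> R" "v \<in> R" "X = rd u" "Y = rd v" using assms carrier_Rq by auto
  have "traceq K L q (X \<oplus>\<^bsub>Rq\<^esub> Y) = traceq K L q (rd (u + v))" using uv red_add by simp
  also have "\<dots> = rd (tr (u + v))" using T_red roi_add[OF nfK] uv by simp
  also have "\<dots> = rd (tr u + tr v)" using tr_add roi_K[OF nfK] uv by simp
  also have "\<dots> = rd (tr u) \<oplus>\<^bsub>Rq\<^esub> rd (tr v)" using red_add tr_R uv by simp
  finally show ?thesis using uv T_red by simp
qed

lemma T_smult: assumes "c \<in> Sq" "X \<in> carrier Rq"
  shows "traceq K L q (c \<otimes>\<^bsub>Rq\<^esub> X) = c \<otimes>\<^bsub>Rq\<^esub> traceq K L q X"
proof -
  obtain s0 where s0: "s0 \<in> S" "c = rd s0" using assms(1) unfolding Sq_in_Rq_def by auto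
  obtain u where u: "u \<in> R" "X = rd u" using assms(2) carrier_Rq by auto
  have s0R: "s0 \<in> R" using s0 SR by auto
  have "s0 \<in> L" using s0 unfolding ring_of_integers_def by simp
  have "traceq K L q (c \<otimes>\<^bsub>Rq\<^esub> X) = traceq K L q (rd (s0 * u))" using s0 u s0R red_mult by simp
  also have "\<dots> = rd (tr (s0 * u))" using T_red roi_mult[OF nfK] u s0R by simp
  also have "\<dots> = rd (s0 * tr u)" using tr_smult roi_K[OF nfK] u \<open>s0 \<in> L\<close> by simp
  also have "\<dots> = rd s0 \<otimes>\<^bsub>Rq\<^esub> rd (tr u)" using red_mult tr_R u s0R by simp
  finally show ?thesis using u s0 T_red by simp
qed

lemma Sq_mult: assumes "c \<in> Sq" "d \<in> Sq" shows "c \<otimes>\<^bsub>Rq\<^esub> d \<in> Sq"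
proof -
  obtain s0 where s0: "s0 \<in> S" "c = rd s0" using assms(1) unfolding Sq_in_Rq_def by auto
  obtain s1 where s1: "s1 \<in> S" "d = rd s1" using assms(2) unfolding Sq_in_Rq_def by auto
  have "c \<otimes>\<^bsub>Rq\<^esub> d = rd (s0 * s1)" using s0 s1 SR red_mult by auto
  moreover have "s0 * s1 \<in> S" using s0 s1 roi_mult[OF nfL] by auto
  ultimately show ?thesis unfolding Sq_in_Rq_def by auto
qed

lemma Sq_ne: "Sq \<noteq> {}" unfolding Sq_in_Rq_def using roi_0[OF nfL] by auto

end



lemma vsQ: "vector_space (\<lambda>(r::rat) (x::complex). of_rat r * x)"
  by (unfold_locales; auto simp: algebra_simps of_rat_add of_rat_mult)

lemma clear_denoms:
  fixes u :: "'a \<Rightarrow> rat"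
  assumes "finite Y"
  shows "\<exists>D::int. D > 0 \<and> (\<forall>v\<in>Y. \<exists>n::int. of_int n = u v * of_int D)"
  using assms
proof (induction Y rule: finite_induct)
  case empty thus ?case by (intro exI[of _ 1]) auto
next
  case (insert a Y)
  then obtain D where D: "D > 0" "\<forall>v\<in>Y. \<exists>n::int. of_int n = u v * of_int D" by blast
  obtain n d where nd: "quotient_of (u a) = (n, d)" by (cases "quotient_of (u a)")
  have d: "d > 0" using quotient_of_denom_pos[OF nd] .
  have ua: "u a = of_int n / of_int d" using quotient_of_div[OF nd] .
  have pos: "D * d > 0" using D d by simp
  have "\<exists>m::int. of_int m = u v * of_int (D * d)" if "v \<in> insert a Y" for v
    proof (cases "v = a")
      case True
      hence "u v * of_int (D * d) = of_int (n * D)" using ua d by (simp add: field_simps)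
      thus ?thesis by metis
    next
      case False
      then obtain m where "of_int m = u v * of_int D" using D \<open>v \<in> insert a Y\<close> by auto
      hence "u v * of_int (D * d) = of_int (m * d)" by (simp add: algebra_simps)
      thus ?thesis by metis
    qed
  thus ?case using pos by blast
qed

context gsetup begin

definition indep_q :: "complex set \<Rightarrow> bool" where
  "indep_q Y \<longleftrightarrow> (\<forall>c :: complex \<Rightarrow> int. (\<exists>r\<in>R. (\<Sum>y\<in>Y. of_int (c y) * y) = of_nat q * r)
                     \<longrightarrow> (\<forall>y\<in>Y. int q dvd c y))"

lemma q_gt1: "q > 1" using q_prime prime_gt_1_nat by blast

lemma zero_combo:
  assumes "finite Y" "indep_q Y"
  shows "(\<Sum>y\<in>Y. of_int (c y) * y) = 0 \<Longrightarrow> \<forall>y\<in>Y. c y = 0"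
proof (induction "\<Sum>y\<in>Y. nat \<bar>c y\<bar>" arbitrary: c rule: less_induct)
  case less
  have "\<exists>r\<in>R. (\<Sum>y\<in>Y. of_int (c y) * y) = of_nat q * r"
    using less.prems roi_0[OF nfK] by (intro bexI[of _ 0]) auto
  hence "\<forall>y\<in>Y. int q dvd c y"
    using assms(2) unfolding indep_q_def by blast
  define d where "d y = c y div int q" for y
  have d: "\<forall>y\<in>Y. c y = int q * d y" using \<open>\<forall>y\<in>Y. int q dvd c y\<close> unfolding d_def by simp
  have "(\<Sum>y\<in>Y. of_int (c y) * y) = of_nat q * (\<Sum>y\<in>Y. of_int (d y) * y)"
    using d by (simp add: sum_distrib_left algebra_simps)
  hence dz: "(\<Sum>y\<in>Y. of_int (d y) * y) = 0" using less.prems q_gt1 by simp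
  show ?case
  proof (rule ccontr)
    assume "\<not> (\<forall>y\<in>Y. c y = 0)"
    then obtain y0 where y0: "y0 \<in> Y" "c y0 \<noteq> 0" by blast
    have "(\<Sum>y\<in>Y. nat \<bar>d y\<bar>) < (\<Sum>y\<in>Y. nat \<bar>c y\<bar>)"
    proof (rule sum_strict_mono_ex1[OF assms(1)])
      show "\<forall>x\<in>Y. nat \<bar>d x\<bar> \<le> nat \<bar>c x\<bar>"
      proof
        fix x assume x: "x \<in> Y"
        have "1 * \<bar>d x\<bar> \<le> int q * \<bar>d x\<bar>" using q_gt1 by (intro mult_right_mono) auto
        thus "nat \<bar>d x\<bar> \<le> nat \<bar>c x\<bar>" using d x by (simp add: abs_mult)
      qed
      show "\<exists>a\<in>Y. nat \<bar>d a\<bar> < nat \<bar>c a\<bar>"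
      proof (intro bexI[OF _ y0(1)])
        have "d y0 \<noteq> 0" using d y0 by auto
        hence "\<bar>d y0\<bar> < int q * \<bar>d y0\<bar>" using q_gt1 by simp
        thus "nat \<bar>d y0\<bar> < nat \<bar>c y0\<bar>" using d y0 by (simp add: abs_mult)
      qed
    qed
    from less.hyps[OF this dz] have "\<forall>y\<in>Y. d y = 0" .
    thus False using d y0 by auto
  qed
qed

lemma indep_q_Qindep:
  assumes "finite Y" "indep_q Y"
  shows "\<not> module.dependent (\<lambda>(r::rat) (x::complex). of_rat r * x) Y"
proof
  interpret Qv: vector_space "\<lambda>(r::rat) (x::complex). of_rat r * x" by (rule vsQ)
  assume "module.dependent (\<lambda>(r::rat) (x::complex). of_rat r * x) Y"
  then obtain t u where tu: "finite t" "t \<subseteq> Y" "(\<Sum>v\<in>t. of_rat (u v) * v) = 0" "\<exists>v\<in>t. u v \<noteq> 0"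
    unfolding Qv.dependent_explicit by auto
  define u' where "u' = (\<lambda>v. if v \<in> t then u v else 0)"
  have "(\<Sum>v\<in>Y. of_rat (u' v) * v) = (\<Sum>v\<in>t. of_rat (u v) * v)"
    unfolding u'_def using tu(2) assms(1)
    by (intro sum.mono_neutral_cong_right) auto
  hence s0: "(\<Sum>v\<in>Y. of_rat (u' v) * v) = 0" using tu(3) by simp
  obtain D :: int where D: "D > 0" "\<forall>v\<in>Y. \<exists>n::int. of_int n = u' v * of_int D"
    using clear_denoms[OF assms(1), of u'] by blast
  from bchoice[OF D(2)] obtain c where c: "\<forall>v\<in>Y. of_int (c v) = u' v * of_int D" by blast
  have "(\<Sum>v\<in>Y. of_int (c v) * v) = of_int D * (\<Sum>v\<in>Y. of_rat (u' v) * v)"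
    unfolding sum_distrib_left
  proof (rule sum.cong[OF refl])
    fix v assume "v \<in> Y"
    hence "(of_int (c v) :: complex) = of_rat (of_int (c v))" by simp
    also have "\<dots> = of_rat (u' v) * of_int D" using c \<open>v \<in> Y\<close> by (simp add: of_rat_mult)
    finally show "of_int (c v) * v = of_int D * (of_rat (u' v) * v)" by simp
  qed
  hence "(\<Sum>v\<in>Y. of_int (c v) * v) = 0" using s0 by simp
  hence "\<forall>v\<in>Y. c v = 0" using zero_combo[OF assms] by blast
  moreover obtain v where "v \<in> t" "u v \<noteq> 0" using tu(4) by blast
  ultimately have "u' v * of_int D = 0" using c tu(2) by (metis of_int_0 subsetD)
  thus False using D \<open>v \<in> t\<close> \<open>u v \<noteq> 0\<close> unfolding u'_def by simp
qed

lemma indep_card_bound: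
  obtains N where "\<And>Y. Y \<subseteq> K \<Longrightarrow> finite Y \<Longrightarrow> indep_q Y \<Longrightarrow> card Y \<le> N"
proof -
  obtain B where B: "finite B" "B \<subseteq> K" "\<forall>x\<in>K. \<exists>c. x = (\<Sum>b\<in>B. of_rat (c b) * b)"
    using nfK unfolding number_field_def by blast
  interpret Qv: vector_space "\<lambda>(r::rat) (x::complex). of_rat r * x" by (rule vsQ)
  have "K \<subseteq> Qv.span B"
  proof
    fix x assume "x \<in> K"
    then obtain c where "x = (\<Sum>b\<in>B. of_rat (c b) * b)" using B by blast
    moreover have "(\<Sum>b\<in>B. of_rat (c b) * b) \<in> Qv.span B"
    proof (rule Qv.span_sum)
      fix b assume "b \<in> B"
      show "of_rat (c b) * b \<in> Qv.span B" using Qv.span_scale[OF Qv.span_base[OF \<open>b \<in> B\<close>], of "c b"] by simp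
    qed
    ultimately show "x \<in> Qv.span B" by simp
  qed
  show ?thesis
  proof (rule that[of "card B"])
    fix Y assume "Y \<subseteq> K" "finite Y" "indep_q Y"
    thus "card Y \<le> card B" using Qv.independent_span_bound[OF B(1) indep_q_Qindep] \<open>K \<subseteq> Qv.span B\<close>
      by blast
  qed
qed

end



context gsetup begin

lemma roi_of_int: "of_int k \<in> R"
  using nf_of_int[OF nfK] by (auto simp: roi_iff[OF nfK])

lemma finite_Rq: "finite (carrier Rq)"
proof -
  obtain N where N: "\<And>Y. Y \<subseteq> K \<Longrightarrow> finite Y \<Longrightarrow> indep_q Y \<Longrightarrow> card Y \<le> N"
    using indep_card_bound by blast
  define P where "P Y \<longleftrightarrow> Y \<subseteq> R \<and> finite Y \<and> indep_q Y" for Y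
  have P0: "P {}" unfolding P_def indep_q_def by simp
  have bnd: "P Y \<Longrightarrow> card Y \<le> N" for Y unfolding P_def using N roi_K[OF nfK] by blast
  have "\<exists>m. (\<exists>Y. P Y \<and> card Y = m) \<and> (\<forall>k. (\<exists>Y. P Y \<and> card Y = k) \<longrightarrow> k \<le> m)"
    by (rule Nat.ex_has_greatest_nat[of "\<lambda>k. \<exists>Y. P Y \<and> card Y = k" 0 N]) (use P0 bnd in auto)
  then obtain m Y where Y: "P Y" "card Y = m" and m: "\<forall>k. (\<exists>Y. P Y \<and> card Y = k) \<longrightarrow> k \<le> m"
    by blast
  hence YR: "Y \<subseteq> R" "finite Y" "indep_q Y" unfolding P_def by auto
  have span: "\<exists>g. (\<forall>y\<in>Y. g y \<in> {0..<int q}) \<and> rd x = rd (\<Sum>y\<in>Y. of_int (g y) * y)"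
    if x: "x \<in> R" "x \<notin> Y" for x
  proof -
    have "\<not> P (insert x Y)"
    proof
      assume "P (insert x Y)"
      hence "card (insert x Y) \<le> m" using m by blast
      thus False using Y YR x by simp
    qed
    hence "\<not> indep_q (insert x Y)" unfolding P_def using YR x by auto
    then obtain c r where c: "r \<in> R" "(\<Sum>y\<in>insert x Y. of_int (c y) * y) = of_nat q * r"
      "\<exists>y\<in>insert x Y. \<not> int q dvd c y"
      unfolding indep_q_def by blast
    have sumx: "of_int (c x) * x + (\<Sum>y\<in>Y. of_int (c y) * y) = of_nat q * r" using c(2) YR x by simp
    have ncx: "\<not> int q dvd c x"
    proof
      assume "int q dvd c x"
      then obtain k where k: "c x = int q * k" by (auto simp: dvd_def)
      have "(\<Sum>y\<in>Y. of_int (c y) * y) = of_nat q * (r - of_int k * x)"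
        using sumx k by (simp add: algebra_simps eq_diff_eq')
      moreover have "r - of_int k * x \<in> R"
        using c(1) x roi_diff[OF nfK] roi_mult[OF nfK] roi_of_int by simp
      ultimately have "\<forall>y\<in>Y. int q dvd c y" using YR(3) unfolding indep_q_def by blast
      thus False using c(3) \<open>int q dvd c x\<close> by auto
    qed
    have "coprime (int q) (c x)" using prime_imp_coprime[of "int q" "c x"] q_prime ncx by simp
    hence "gcd (c x) (int q) = 1" by (simp add: coprime_iff_gcd_eq_1 gcd.commute)
    obtain e f where "e * c x + f * int q = gcd (c x) (int q)" using bezout_int by blast
    hence ef: "e * c x + f * int q = 1" using \<open>gcd (c x) (int q) = 1\<close> by simp
    define g where "g y = (- e * c y) mod int q" for y
    define h where "h y = (- e * c y) div int q" for y
    have gh: "- e * c y = g y + int q * h y" for y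
      unfolding g_def h_def using mod_mult_div_eq[of "- e * c y" "int q"] by simp
    have "x = of_int (e * c x + f * int q) * x" using ef by simp
    also have "\<dots> = of_int e * (of_int (c x) * x) + of_nat q * (of_int f * x)" by (simp add: algebra_simps)
    also have "\<dots> = of_int e * (of_nat q * r - (\<Sum>y\<in>Y. of_int (c y) * y)) + of_nat q * (of_int f * x)"
      using sumx by (simp add: eq_diff_eq)
    also have "\<dots> = (\<Sum>y\<in>Y. of_int (- e * c y) * y) + of_nat q * (of_int e * r + of_int f * x)"
      by (simp add: algebra_simps sum_distrib_left sum_negf)
    also have "(\<Sum>y\<in>Y. of_int (- e * c y) * y) = (\<Sum>y\<in>Y. of_int (g y) * y) + of_nat q * (\<Sum>y\<in>Y. of_int (h y) * y)"
      unfolding gh by (simp add: algebra_simps sum.distrib sum_distrib_left)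
    finally have xe: "x - (\<Sum>y\<in>Y. of_int (g y) * y) = of_nat q * ((\<Sum>y\<in>Y. of_int (h y) * y) + (of_int e * r + of_int f * x))"
      by (simp add: algebra_simps)
    have sR: "(\<Sum>y\<in>Y. of_int (k y) * y) \<in> R" for k
      using YR(1) by (intro sum_closed_set) (auto intro: roi_0[OF nfK] roi_add[OF nfK] roi_mult[OF nfK] roi_of_int)
    have "(\<Sum>y\<in>Y. of_int (h y) * y) + (of_int e * r + of_int f * x) \<in> R"
      using sR[of h] c(1) x roi_add[OF nfK] roi_mult[OF nfK] roi_of_int by simp
    hence "rd x = rd (\<Sum>y\<in>Y. of_int (g y) * y)" using red_eq_iff[OF x(1) sR[of g]] xe by blast
    moreover have "\<forall>y\<in>Y. g y \<in> {0..<int q}" unfolding g_def using q_gt1 by simp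
    ultimately show ?thesis by blast
  qed
  have "carrier Rq \<subseteq> rd ` Y \<union> (\<lambda>g. rd (\<Sum>y\<in>Y. of_int (g y) * y)) ` (Y \<rightarrow>\<^sub>E {0..<int q})"
  proof
    fix X assume "X \<in> carrier Rq"
    then obtain x where x: "x \<in> R" "X = rd x" using carrier_Rq by auto
    show "X \<in> rd ` Y \<union> (\<lambda>g. rd (\<Sum>y\<in>Y. of_int (g y) * y)) ` (Y \<rightarrow>\<^sub>E {0..<int q})"
    proof (cases "x \<in> Y")
      case True thus ?thesis using x by auto
    next
      case False
      then obtain g where g: "\<forall>y\<in>Y. g y \<in> {0..<int q}" "rd x = rd (\<Sum>y\<in>Y. of_int (g y) * y)"
        using span x by blast
      have "restrict g Y \<in> Y \<rightarrow>\<^sub>E {0..<int q}" using g(1) by auto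
      moreover have "(\<Sum>y\<in>Y. of_int (restrict g Y y) * y) = (\<Sum>y\<in>Y. of_int (g y) * y)" by simp
      ultimately have "X \<in> (\<lambda>g. rd (\<Sum>y\<in>Y. of_int (g y) * y)) ` (Y \<rightarrow>\<^sub>E {0..<int q})"
        using g x by (intro image_eqI[where x="restrict g Y"]) auto
      thus ?thesis by blast
    qed
  qed
  moreover have "finite (rd ` Y \<union> (\<lambda>g. rd (\<Sum>y\<in>Y. of_int (g y) * y)) ` (Y \<rightarrow>\<^sub>E {0..<int q}))"
    using YR(2) by (simp add: finite_PiE)
  ultimately show ?thesis by (rule finite_subset)
qed

lemma finite_Sq: "finite Sq" using finite_Rq Sq_sub finite_subset by blast

end



context gsetup begin

abbreviation "T \<equiv> traceq K L q"

lemma main: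
  assumes s_in: "s \<in> carrier Rq"
    and a0_unit: "a0 \<in> Units Rq"
    and Ta0_unit: "\<exists>y\<in>Sq. T a0 \<otimes>\<^bsub>Rq\<^esub> y = \<one>\<^bsub>Rq\<^esub>"
    and chi_supp: "set_pmf chi \<subseteq> carrier Rq"
  shows "map_pmf (\<lambda>(a, b). (T a, T b)) (A_dist Rq Sq a0 s chi) =
         RLWE_dist Rq Sq (T (a0 \<otimes>\<^bsub>Rq\<^esub> s) \<otimes>\<^bsub>Rq\<^esub> inv\<^bsub>Rq\<^esub> (T a0)) (map_pmf T chi)"
proof -
  interpret Rc: cring Rq by (rule Rq_cring)
  have a0: "a0 \<in> carrier Rq" using a0_unit by auto
  obtain y where y: "y \<in> Sq" "T a0 \<otimes>\<^bsub>Rq\<^esub> y = \<one>\<^bsub>Rq\<^esub>" using Ta0_unit by blast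
  have yc: "y \<in> carrier Rq" using y Sq_sub by auto
  have Ta0: "T a0 \<in> Sq" "T a0 \<in> carrier Rq" using T_in T_carrier a0 by auto
  have invy: "inv\<^bsub>Rq\<^esub> (T a0) = y" using Rc.comm_inv_char[OF Ta0(2) yc y(2)] .
  have Ta0U: "T a0 \<in> Units Rq" unfolding Units_def using Ta0(2) yc y(2) Rc.m_comm[OF Ta0(2) yc] by auto
  define s' where "s' = T (a0 \<otimes>\<^bsub>Rq\<^esub> s) \<otimes>\<^bsub>Rq\<^esub> y"
  have fin: "finite Sq" "Sq \<noteq> {}" using finite_Sq Sq_ne by auto
  have inj1: "inj_on (\<lambda>c. a0 \<otimes>\<^bsub>Rq\<^esub> c) Sq"
  proof (rule inj_onI)
    fix c d assume cd: "c \<in> Sq" "d \<in> Sq" "a0 \<otimes>\<^bsub>Rq\<^esub> c = a0 \<otimes>\<^bsub>Rq\<^esub> d"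
    have "c \<in> carrier Rq" "d \<in> carrier Rq" using cd Sq_sub by auto
    thus "c = d" using Rc.Units_l_cancel[OF a0_unit \<open>c \<in> carrier Rq\<close> \<open>d \<in> carrier Rq\<close>] cd(3) by simp
  qed
  have inj2: "inj_on (\<lambda>c. T a0 \<otimes>\<^bsub>Rq\<^esub> c) Sq"
  proof (rule inj_onI)
    fix c d assume cd: "c \<in> Sq" "d \<in> Sq" "T a0 \<otimes>\<^bsub>Rq\<^esub> c = T a0 \<otimes>\<^bsub>Rq\<^esub> d"
    have "c \<in> carrier Rq" "d \<in> carrier Rq" using cd Sq_sub by auto
    thus "c = d" using Rc.Units_l_cancel[OF Ta0U \<open>c \<in> carrier Rq\<close> \<open>d \<in> carrier Rq\<close>] cd(3) by simp
  qed
  have img2: "(\<lambda>c. T a0 \<otimes>\<^bsub>Rq\<^esub> c) ` Sq = Sq"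
  proof (intro equalityI subsetI)
    fix d assume "d \<in> (\<lambda>c. T a0 \<otimes>\<^bsub>Rq\<^esub> c) ` Sq"
    thus "d \<in> Sq" using Sq_mult Ta0 by auto
  next
    fix d assume d: "d \<in> Sq"
    hence dc: "d \<in> carrier Rq" using Sq_sub by auto
    have "T a0 \<otimes>\<^bsub>Rq\<^esub> (y \<otimes>\<^bsub>Rq\<^esub> d) = d"
      using y(2) dc yc Ta0 by (simp add: Rc.m_assoc[symmetric])
    moreover have "y \<otimes>\<^bsub>Rq\<^esub> d \<in> Sq" using Sq_mult y d by auto
    ultimately show "d \<in> (\<lambda>c. T a0 \<otimes>\<^bsub>Rq\<^esub> c) ` Sq" by (intro image_eqI[where x="y \<otimes>\<^bsub>Rq\<^esub> d"]) auto
  qed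
  have LHS: "map_pmf (\<lambda>(a, b). (T a, T b)) (A_dist Rq Sq a0 s chi) =
     bind_pmf (pmf_of_set Sq) (\<lambda>c. bind_pmf chi (\<lambda>e.
        return_pmf (T (a0 \<otimes>\<^bsub>Rq\<^esub> c), T ((a0 \<otimes>\<^bsub>Rq\<^esub> c) \<otimes>\<^bsub>Rq\<^esub> s \<oplus>\<^bsub>Rq\<^esub> e))))"
    unfolding A_dist_def map_pmf_of_set_inj[OF inj1 fin(2) fin(1), symmetric]
    by (simp add: bind_map_pmf map_bind_pmf)
  have RHS: "RLWE_dist Rq Sq s' (map_pmf T chi) =
     bind_pmf (pmf_of_set Sq) (\<lambda>c. bind_pmf chi (\<lambda>e.
        return_pmf (T a0 \<otimes>\<^bsub>Rq\<^esub> c, (T a0 \<otimes>\<^bsub>Rq\<^esub> c) \<otimes>\<^bsub>Rq\<^esub> s' \<oplus>\<^bsub>Rq\<^esub> T e)))"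
  proof -
    have eq: "pmf_of_set Sq = map_pmf (\<lambda>c. T a0 \<otimes>\<^bsub>Rq\<^esub> c) (pmf_of_set Sq)"
      using map_pmf_of_set_inj[OF inj2 fin(2) fin(1)] img2 by simp
    show ?thesis unfolding RLWE_dist_def by (subst eq) (simp add: bind_map_pmf)
  qed
  have "map_pmf (\<lambda>(a, b). (T a, T b)) (A_dist Rq Sq a0 s chi) = RLWE_dist Rq Sq s' (map_pmf T chi)"
    unfolding LHS RHS
  proof (intro bind_pmf_cong refl)
    fix c e assume c: "c \<in> set_pmf (pmf_of_set Sq)" and e: "e \<in> set_pmf chi"
    have cS: "c \<in> Sq" using c fin by simp
    have cc: "c \<in> carrier Rq" using cS Sq_sub by auto
    have ec: "e \<in> carrier Rq" using e chi_supp by auto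
    have as: "a0 \<otimes>\<^bsub>Rq\<^esub> s \<in> carrier Rq" using a0 s_in by simp
    have Tas: "T (a0 \<otimes>\<^bsub>Rq\<^esub> s) \<in> carrier Rq" using T_carrier[OF as] .
    have e1: "T (a0 \<otimes>\<^bsub>Rq\<^esub> c) = T a0 \<otimes>\<^bsub>Rq\<^esub> c"
      using T_smult[OF cS a0] Rc.m_comm[OF a0 cc] Rc.m_comm[OF cc Ta0(2)] by simp
    have "(a0 \<otimes>\<^bsub>Rq\<^esub> c) \<otimes>\<^bsub>Rq\<^esub> s = c \<otimes>\<^bsub>Rq\<^esub> (a0 \<otimes>\<^bsub>Rq\<^esub> s)"
      using a0 cc s_in by (simp add: Rc.m_ac)
    hence "T ((a0 \<otimes>\<^bsub>Rq\<^esub> c) \<otimes>\<^bsub>Rq\<^esub> s \<oplus>\<^bsub>Rq\<^esub> e) = c \<otimes>\<^bsub>Rq\<^esub> T (a0 \<otimes>\<^bsub>Rq\<^esub> s) \<oplus>\<^bsub>Rq\<^esub> T e"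
      using T_add[of "(a0 \<otimes>\<^bsub>Rq\<^esub> c) \<otimes>\<^bsub>Rq\<^esub> s" e] T_smult[OF cS as] a0 cc s_in ec by simp
    moreover have "(T a0 \<otimes>\<^bsub>Rq\<^esub> c) \<otimes>\<^bsub>Rq\<^esub> s' = (c \<otimes>\<^bsub>Rq\<^esub> T (a0 \<otimes>\<^bsub>Rq\<^esub> s)) \<otimes>\<^bsub>Rq\<^esub> (T a0 \<otimes>\<^bsub>Rq\<^esub> y)"
      unfolding s'_def using Ta0(2) cc Tas yc by (simp add: Rc.m_ac)
    ultimately have e2: "T ((a0 \<otimes>\<^bsub>Rq\<^esub> c) \<otimes>\<^bsub>Rq\<^esub> s \<oplus>\<^bsub>Rq\<^esub> e) = (T a0 \<otimes>\<^bsub>Rq\<^esub> c) \<otimes>\<^bsub>Rq\<^esub> s' \<oplus>\<^bsub>Rq\<^esub> T e"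
      using y(2) cc Tas by simp
    show "return_pmf (T (a0 \<otimes>\<^bsub>Rq\<^esub> c), T ((a0 \<otimes>\<^bsub>Rq\<^esub> c) \<otimes>\<^bsub>Rq\<^esub> s \<oplus>\<^bsub>Rq\<^esub> e)) =
          return_pmf (T a0 \<otimes>\<^bsub>Rq\<^esub> c, (T a0 \<otimes>\<^bsub>Rq\<^esub> c) \<otimes>\<^bsub>Rq\<^esub> s' \<oplus>\<^bsub>Rq\<^esub> T e)"
      using e1 e2 by simp
  qed
  thus ?thesis unfolding s'_def invy .
qed

end

theorem mainTheorem4:
  fixes K L :: "complex set" and q :: nat
    and a0 s :: "complex set" and chi :: "complex set pmf"
  defines "R \<equiv> ring_of_integers K" and "S \<equiv> ring_of_integers L"
  defines "Rq \<equiv> quot_q R q" and "Sq \<equiv> Sq_in_Rq R S q"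
  defines "T \<equiv> traceq K L q"
  assumes galois: "galois_ext K L"
    and q_prime: "prime q"
    and s_in: "s \<in> carrier Rq"
    and a0_unit: "a0 \<in> Units Rq"
    and Ta0_unit: "\<exists>y\<in>Sq. T a0 \<otimes>\<^bsub>Rq\<^esub> y = \<one>\<^bsub>Rq\<^esub>"
    and chi_supp: "set_pmf chi \<subseteq> carrier Rq"
  shows "map_pmf (\<lambda>(a, b). (T a, T b)) (A_dist Rq Sq a0 s chi) =
         RLWE_dist Rq Sq (T (a0 \<otimes>\<^bsub>Rq\<^esub> s) \<otimes>\<^bsub>Rq\<^esub> inv\<^bsub>Rq\<^esub> (T a0)) (map_pmf T chi)"

proof -
  have gs: "gsetup K L q" by (rule gsetup.intro[OF galois q_prime])
  have s_in': "s \<in> carrier (quot_q (ring_of_integers K) q)" using s_in unfolding Rq_def R_def .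
  have a0': "a0 \<in> Units (quot_q (ring_of_integers K) q)" using a0_unit unfolding Rq_def R_def .
  have T': "\<exists>y\<in>Sq_in_Rq (ring_of_integers K) (ring_of_integers L) q.
      traceq K L q a0 \<otimes>\<^bsub>quot_q (ring_of_integers K) q\<^esub> y = \<one>\<^bsub>quot_q (ring_of_integers K) q\<^esub>"
    using Ta0_unit unfolding Rq_def R_def Sq_def S_def T_def .
  have c': "set_pmf chi \<subseteq> carrier (quot_q (ring_of_integers K) q)" using chi_supp unfolding Rq_def R_def .
  show ?thesis unfolding Rq_def Sq_def T_def R_def S_def
    by (rule gsetup.main[OF gs s_in' a0' T' c'])
qed

end
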